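(* Let $f:(\mathbb C^n,S)\to(\mathbb C^p,0)$ admit a one-parameter stable unfolding $F(x,\lambda)=(f_\lambda(x),\lambda)$, let $\phi:(\mathbb C,0)\to(\mathbb C,0)$ be a holomorphic germ, and let $Af(x,z)=(f_{\phi(z)}(x),z)$ be the augmentation of $f$ by $F$ and $\phi$. Let $H$ be a defining equation of the discriminant $\Delta(F)\subset(\mathbb C^p\times\mathbb C,0)$ and $h(X,Z)=H(X,\phi(Z))$ the corresponding defining equation of $\Delta(Af)$. For $\eta=\sum_{i=1}^p\eta_i(X,\Lambda)\partial/\partial X_i+\eta_{p+1}(X,\Lambda)\partial/\partial\Lambda\in\theta_{p+1}$ set $$\widetilde\eta(X,Z)=\sum_{i=1}^p\eta_i(X,\phi(Z))\phi'(Z)\frac{\partial}{\partial X_i}+\eta_{p+1}(X,\phi(Z))\frac{\partial}{\partial Z}.$$ If $\eta\in\operatorname{Derlog}(\Delta(F))$, then $\widetilde\eta\in\operatorname{Derlog}(\Delta(Af))$. Furthermore, if in addition $\eta_{p+1}(X,0)=0$, then $\widetilde\eta$ is divisible by $\phi'$ and $\widetilde\eta/\phi'\in\operatorname{Derlog}(\Delta(Af))$.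
   Context: All germs are holomorphic. A one-parameter unfolding of $f$ is a germ $F(x,\lambda)=(f_\lambda(x),\lambda)$ with $f_0=f$; it is stable if $\theta(F)=tF(\theta_{n+1})+wF(\theta_{p+1})$. The discriminant $\Delta(g)$ of a map-germ $g$ is the image of its non-submersive points. Here $\Delta(F)$ is assumed to be a hypersurface with defining equation $H$, coordinates on the target of $F$ are $(X,\Lambda)$ and on the target of $Af$ are $(X,Z)$; $\operatorname{Derlog}(\Delta(F))=\{\eta\in\theta_{p+1}:\eta(H)\in H\mathcal O_{p+1}\}$ and $\operatorname{Derlog}(\Delta(Af))=\{\xi\in\theta_{p+1}:\xi(h)\in h\mathcal O_{p+1}\}$ (vector fields tangent to the discriminant). *)

theory Defs
  imports "HOL-Analysis.Analysis"
begin

definition cscale :: "complex \<Rightarrow> ((complex^'m) \<times> complex) \<Rightarrow> ((complex^'m) \<times> complex)" where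
  "cscale c v = ((\<chi> i. c * fst v $ i), c * snd v)"

definition cdiff_at :: "((complex^'m) \<times> complex \<Rightarrow> complex) \<Rightarrow> (complex^'m) \<times> complex \<Rightarrow> bool" where
  "cdiff_at g x \<longleftrightarrow> (\<exists>D. (g has_derivative D) (at x) \<and> (\<forall>c v. D (cscale c v) = c * D v))"

definition holo_on :: "((complex^'m) \<times> complex) set \<Rightarrow> ((complex^'m) \<times> complex \<Rightarrow> complex) \<Rightarrow> bool" where
  "holo_on U g \<longleftrightarrow> open U \<and> (\<forall>x\<in>U. cdiff_at g x)"

definition hgerm :: "(complex^'m) \<times> complex \<Rightarrow> ((complex^'m) \<times> complex \<Rightarrow> complex) \<Rightarrow> bool" where
  "hgerm a g \<longleftrightarrow> (\<exists>U. a \<in> U \<and> holo_on U g)"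

definition hvgerm :: "(complex^'m) \<times> complex \<Rightarrow> ((complex^'m) \<times> complex \<Rightarrow> (complex^'k) \<times> complex) \<Rightarrow> bool" where
  "hvgerm a G \<longleftrightarrow> (\<forall>i. hgerm a (\<lambda>x. fst (G x) $ i)) \<and> hgerm a (\<lambda>x. snd (G x))"

definition pdX :: "((complex^'p) \<times> complex \<Rightarrow> complex) \<Rightarrow> 'p \<Rightarrow> (complex^'p) \<times> complex \<Rightarrow> complex" where
  "pdX H i x = deriv (\<lambda>t. H ((\<chi> j. if j = i then t else fst x $ j), snd x)) (fst x $ i)"

definition pdL :: "((complex^'p) \<times> complex \<Rightarrow> complex) \<Rightarrow> (complex^'p) \<times> complex \<Rightarrow> complex" where
  "pdL H x = deriv (\<lambda>t. H (fst x, t)) (snd x)"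

definition vf_act :: "((complex^'p) \<times> complex \<Rightarrow> (complex^'p) \<times> complex) \<Rightarrow> ((complex^'p) \<times> complex \<Rightarrow> complex)
     \<Rightarrow> (complex^'p) \<times> complex \<Rightarrow> complex" where
  "vf_act eta H x = (\<Sum>i\<in>UNIV. fst (eta x) $ i * pdX H i x) + snd (eta x) * pdL H x"

definition Derlog :: "((complex^'p) \<times> complex \<Rightarrow> complex) \<Rightarrow> ((complex^'p) \<times> complex \<Rightarrow> (complex^'p) \<times> complex) \<Rightarrow> bool" where
  "Derlog H eta \<longleftrightarrow> hvgerm 0 eta \<and>
     (\<exists>a. hgerm 0 a \<and> (\<forall>\<^sub>F x in nhds 0. vf_act eta H x = a x * H x))"

definition unf :: "(complex^'n \<Rightarrow> complex \<Rightarrow> complex^'p) \<Rightarrow> (complex^'n) \<times> complex \<Rightarrow> (complex^'p) \<times> complex" where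
  "unf fam y = (fam (fst y) (snd y), snd y)"

definition nonsubm :: "((complex^'n) \<times> complex \<Rightarrow> (complex^'p) \<times> complex) \<Rightarrow> (complex^'n) \<times> complex \<Rightarrow> bool" where
  "nonsubm F y \<longleftrightarrow> range (frechet_derivative F (at y)) \<noteq> UNIV"

text \<open>Stability of the multigerm F : (C^n x C, S x {0}) \<rightarrow> (C^p x C, 0):
  theta(F) = tF(theta_{n+1}) + wF(theta_{p+1}).\<close>
definition stable_multigerm :: "(complex^'n) set \<Rightarrow> ((complex^'n) \<times> complex \<Rightarrow> (complex^'p) \<times> complex) \<Rightarrow> bool" where
  "stable_multigerm S F \<longleftrightarrow>
     (\<forall>\<xi> :: complex^'n \<Rightarrow> ((complex^'n) \<times> complex \<Rightarrow> (complex^'p) \<times> complex).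
        (\<forall>s\<in>S. hvgerm (s, 0) (\<xi> s)) \<longrightarrow>
        (\<exists>(a :: complex^'n \<Rightarrow> ((complex^'n) \<times> complex \<Rightarrow> (complex^'n) \<times> complex))
           (b :: (complex^'p) \<times> complex \<Rightarrow> (complex^'p) \<times> complex).
           (\<forall>s\<in>S. hvgerm (s, 0) (a s)) \<and> hvgerm 0 b \<and>
           (\<forall>s\<in>S. \<forall>\<^sub>F y in nhds (s, 0). \<xi> s y = frechet_derivative F (at y) (a s y) + b (F y))))"

definition vanishes_on_disc :: "(complex^'n) set \<Rightarrow> ((complex^'n) \<times> complex \<Rightarrow> (complex^'p) \<times> complex)
     \<Rightarrow> ((complex^'p) \<times> complex \<Rightarrow> complex) \<Rightarrow> bool" where
  "vanishes_on_disc S F g \<longleftrightarrow>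
     (\<exists>W. open W \<and> S \<times> {0} \<subseteq> W \<and> (\<forall>y\<in>W. nonsubm F y \<longrightarrow> g (F y) = 0))"

text \<open>H is a (reduced) defining equation of the hypersurface germ Delta(F):
  H generates the ideal of holomorphic germs vanishing on Delta(F), and Delta(F) is a hypersurface
  (H vanishes at 0 and is not the zero germ).\<close>
definition defining_eq_disc :: "(complex^'n) set \<Rightarrow> ((complex^'n) \<times> complex \<Rightarrow> (complex^'p) \<times> complex)
     \<Rightarrow> ((complex^'p) \<times> complex \<Rightarrow> complex) \<Rightarrow> bool" where
  "defining_eq_disc S F H \<longleftrightarrow> hgerm 0 H \<and> H 0 = 0 \<and> \<not> (\<forall>\<^sub>F x in nhds 0. H x = 0) \<and>
     vanishes_on_disc S F H \<and>
     (\<forall>g. hgerm 0 g \<and> vanishes_on_disc S F g \<longrightarrow>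
        (\<exists>u. hgerm 0 u \<and> (\<forall>\<^sub>F x in nhds 0. g x = u x * H x)))"

end

theory Submission
  imports Defs "HOL-Complex_Analysis.Complex_Analysis"
begin


lemma cscale_eq: "cscale c v = (c *s fst v, c * snd v)"
  by (simp add: cscale_def vector_scalar_mult_def)
lemma cscale_Pair: "cscale c (a, b) = (c *s a, c * b)"
  by (simp add: cscale_eq)
lemma cscale_fst: "fst (cscale c v) = c *s fst v" by (simp add: cscale_eq)
lemma cscale_snd: "snd (cscale c v) = c * snd v" by (simp add: cscale_def)

lemma norm_smult_vec: "norm (c *s (X::complex^'m)) = norm c * norm X"
  unfolding norm_vec_def vector_scalar_mult_def
  by (simp add: L2_set_right_distrib norm_mult)

lemma norm_cscale: "norm (cscale c v) = norm c * norm v"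
proof -
  have "norm (cscale c v) = sqrt ((norm c)^2 * ((norm (fst v))^2 + (norm (snd v))^2))"
    unfolding cscale_eq norm_Pair
    by (simp add: norm_smult_vec norm_mult power_mult_distrib distrib_left)
  also have "\<dots> = norm c * norm v"
    by (simp add: real_sqrt_mult norm_Pair[of "fst v" "snd v", simplified])
  finally show ?thesis .
qed

lemma cscale_add_left: "cscale (a + b) v = cscale a v + cscale b v"
  by (simp add: cscale_eq vector_scalar_mult_def vec_eq_iff distrib_right)

lemma cscale_scaleR_left: "cscale (r *\<^sub>R a) v = r *\<^sub>R cscale a v"
  by (simp add: cscale_def prod_eq_iff vec_eq_iff mult_scaleR_left vector_scaleR_component)

lemma bounded_linear_cscale_left: "bounded_linear (\<lambda>h. cscale h v)"
  by (rule bounded_linear_intro[where K="norm v"])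
     (auto simp: cscale_add_left cscale_scaleR_left norm_cscale)

definition clin :: "((complex^'m) \<times> complex \<Rightarrow> complex) \<Rightarrow> bool" where
  "clin D \<longleftrightarrow> (\<forall>c v. D (cscale c v) = c * D v)"

lemma cdiff_fd:
  assumes "cdiff_at g x"
  shows "(g has_derivative frechet_derivative g (at x)) (at x)"
    and "frechet_derivative g (at x) (cscale c v) = c * frechet_derivative g (at x) v"
proof -
  from assms obtain D where D: "(g has_derivative D) (at x)" "\<forall>c v. D (cscale c v) = c * D v"
    by (auto simp: cdiff_at_def)
  have "D = frechet_derivative g (at x)" using D(1) by (rule frechet_derivative_at)
  then show "(g has_derivative frechet_derivative g (at x)) (at x)"
    and "frechet_derivative g (at x) (cscale c v) = c * frechet_derivative g (at x) v"
    using D(1) D(2)[rule_format, of c v] by auto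
qed

lemma cdiffI: "(g has_derivative D) (at x) \<Longrightarrow> (\<And>c v. D (cscale c v) = c * D v) \<Longrightarrow> cdiff_at g x"
  by (auto simp: cdiff_at_def)

lemma cdiff_const: "cdiff_at (\<lambda>_. c) x"
  by (rule cdiffI[OF has_derivative_const]) simp

lemma cdiff_snd: "cdiff_at snd x"
  by (rule cdiffI[OF has_derivative_snd[OF has_derivative_ident]]) (simp add: cscale_snd)

lemma cdiff_fst_nth: "cdiff_at (\<lambda>x. fst x $ i) x"
proof (rule cdiffI)
  show "((\<lambda>x. fst x $ i) has_derivative (\<lambda>x. fst x $ i)) (at x)"
    by (rule bounded_linear_imp_has_derivative)
       (rule bounded_linear_compose[OF bounded_linear_vec_nth bounded_linear_fst])
qed (simp add: cscale_eq vector_scalar_mult_def)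

lemma cdiff_add: "cdiff_at f x \<Longrightarrow> cdiff_at g x \<Longrightarrow> cdiff_at (\<lambda>x. f x + g x) x"
  apply (rule cdiffI[OF has_derivative_add[OF cdiff_fd(1) cdiff_fd(1)]], assumption, assumption)
  by (simp add: cdiff_fd(2) distrib_left)

lemma cdiff_mult: "cdiff_at f x \<Longrightarrow> cdiff_at g x \<Longrightarrow> cdiff_at (\<lambda>x. f x * g x) x"
  apply (rule cdiffI[OF has_derivative_mult[OF cdiff_fd(1) cdiff_fd(1)]], assumption, assumption)
  by (simp add: cdiff_fd(2) algebra_simps)

lemma cdiff_compose_field:
  assumes "g field_differentiable at (f x)" "cdiff_at f x"
  shows "cdiff_at (\<lambda>x. g (f x)) x"
proof -
  from assms(1) obtain g' where g': "(g has_field_derivative g') (at (f x))"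
    by (auto simp: field_differentiable_def)
  show ?thesis
    apply (rule cdiffI[OF has_derivative_compose[OF cdiff_fd(1)[OF assms(2)] g'[unfolded has_field_derivative_def]]])
    by (simp add: cdiff_fd(2)[OF assms(2)])
qed

lemma cdiff_compose_Phi:
  assumes "cdiff_at G (fst x, q x)" "cdiff_at q x"
  shows "cdiff_at (\<lambda>x. G (fst x, q x)) x"
proof -
  have inner: "((\<lambda>x. (fst x, q x)) has_derivative (\<lambda>v. (fst v, frechet_derivative q (at x) v))) (at x)"
    by (rule has_derivative_Pair[OF has_derivative_fst[OF has_derivative_ident] cdiff_fd(1)[OF assms(2)]])
  show ?thesis
    apply (rule cdiffI[OF has_derivative_compose[OF inner cdiff_fd(1)[OF assms(1)]]])
    by (simp add: cdiff_fd(2)[OF assms(2)] cscale_fst flip: cdiff_fd(2)[OF assms(1)] cscale_Pair)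
qed

lemma cdiff_line:
  assumes P: "(P has_derivative (\<lambda>h. cscale h v)) (at w)" and G: "cdiff_at G (P w)"
  shows "((\<lambda>w. G (P w)) has_field_derivative frechet_derivative G (at (P w)) v) (at w)"
  unfolding has_field_derivative_def
  by (rule has_derivative_eq_rhs[OF has_derivative_compose[OF P cdiff_fd(1)[OF G]]])
     (rule ext, simp add: cdiff_fd(2)[OF G] mult.commute)

lemma cdiff_partial_L:
  assumes "cdiff_at G (X, L)"
  shows "((\<lambda>t. G (X, t)) has_field_derivative frechet_derivative G (at (X, L)) (0, 1)) (at L)"
proof -
  have "((\<lambda>t. (X, t)) has_derivative (\<lambda>h. cscale h (0, 1))) (at L)"
    by (rule has_derivative_eq_rhs[OF has_derivative_Pair[OF has_derivative_const has_derivative_ident]])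
       (auto simp: cscale_Pair vector_scalar_mult_def zero_vec_def)
  from cdiff_line[OF this] assms show ?thesis by simp
qed

lemma cdiff_dir:
  assumes "cdiff_at G (y + cscale w v)"
  shows "((\<lambda>w. G (y + cscale w v)) has_field_derivative frechet_derivative G (at (y + cscale w v)) v) (at w)"
proof -
  have "((\<lambda>w. y + cscale w v) has_derivative (\<lambda>h. cscale h v)) (at w)"
    by (rule has_derivative_eq_rhs[OF has_derivative_add[OF has_derivative_const
          bounded_linear_imp_has_derivative[OF bounded_linear_cscale_left]]]) simp
  from cdiff_line[OF this] assms show ?thesis by simp
qed

lemma hgerm_ev: "hgerm a g \<longleftrightarrow> (\<forall>\<^sub>F x in nhds a. cdiff_at g x)"
  unfolding hgerm_def holo_on_def eventually_nhds by blast

lemma cscale_zero_left[simp]: "cscale 0 v = 0"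
  by (simp add: cscale_def zero_prod_def zero_vec_def)

lemma cdiff_cont: "cdiff_at G x \<Longrightarrow> continuous (at x) G"
  using cdiff_fd(1) has_derivative_continuous by blast

lemma cdiff_C1:
  assumes U: "open U" and G: "\<And>x. x \<in> U \<Longrightarrow> cdiff_at G x"
  shows "continuous_on U (\<lambda>y. frechet_derivative G (at y) v)"
proof -
  have "continuous (at y0) (\<lambda>y. frechet_derivative G (at y) v)" if y0: "y0 \<in> U" for y0
  proof -
    obtain r where r: "r > 0" "cball y0 r \<subseteq> U"
      using open_contains_cball[of U] U y0 by blast
    define \<rho> where "\<rho> = r / 2"
    have \<rho>: "\<rho> > 0" "cball y0 (2 * \<rho>) \<subseteq> U" using r by (auto simp: \<rho>_def)
    define s where "s = \<rho> / (2 * (norm v + 1))"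
    have nv: "0 < 2 * (norm v + 1)" by (smt (verit) norm_ge_zero)
    have nv1: "0 < norm v + 1" by (smt (verit) norm_ge_zero)
    have s: "s > 0" using \<rho> nv unfolding s_def by (intro divide_pos_pos)
    have small: "norm (cscale w v) < \<rho>" if "norm w < 2 * s" for w
    proof -
      have "norm (cscale w v) = norm w * norm v" by (simp add: norm_cscale)
      also have "\<dots> \<le> 2 * s * norm v" using that by (simp add: mult_right_mono)
      also have "\<dots> = \<rho> * (norm v / (norm v + 1))" unfolding s_def using nv by (simp add: field_simps)
      also have "\<dots> < \<rho> * 1"
        by (intro mult_strict_left_mono) (use \<rho> nv1 in \<open>auto simp: divide_less_eq_1\<close>)
      finally show ?thesis by simp
    qed
    have inU: "y + cscale w v \<in> ball y0 (2 * \<rho>)" if "y \<in> ball y0 \<rho>" "norm w < 2 * s" for y w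
    proof -
      have e1: "dist y (y + cscale w v) = norm (cscale w v)"
        by (simp add: dist_norm)
      have "dist y0 (y + cscale w v) \<le> dist y0 y + dist y (y + cscale w v)"
        by (rule dist_triangle)
      then have "dist y0 (y + cscale w v) \<le> dist y0 y + norm (cscale w v)"
        using e1 by simp
      then show ?thesis using that small[OF that(2)] by (simp add: dist_commute)
    qed
    have contG: "continuous_on (cball y0 (2 * \<rho>)) G"
      using \<rho> G cdiff_cont by (meson continuous_at_imp_continuous_on subsetD)
    have ucG: "uniformly_continuous_on (cball y0 (2 * \<rho>)) G"
      by (rule compact_uniformly_continuous[OF contG compact_cball])
    have integ: "((\<lambda>u. G (y + cscale u v) / (u - 0) ^ Suc 1) has_contour_integral
          (2 * pi * \<i>) / fact 1 * frechet_derivative G (at y) v) (circlepath 0 s)"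
      if y: "y \<in> ball y0 \<rho>" for y
    proof -
      have der: "((\<lambda>w. G (y + cscale w v)) has_field_derivative frechet_derivative G (at (y + cscale w v)) v) (at w)"
        if "norm w < 2 * s" for w
      proof -
        have "y + cscale w v \<in> U" using inU[OF y that] \<rho>(2) ball_subset_cball by blast
        then show ?thesis by (rule cdiff_dir[OF G])
      qed
      have hol: "(\<lambda>w. G (y + cscale w v)) holomorphic_on ball 0 (2 * s)"
        unfolding holomorphic_on_def field_differentiable_def
        using der has_field_derivative_at_within mem_ball_0 by blast
      have "(deriv ^^ 1) (\<lambda>w. G (y + cscale w v)) 0 = frechet_derivative G (at y) v"
        using DERIV_imp_deriv[OF der[of 0]] s by simp
      moreover have "((\<lambda>u. G (y + cscale u v) / (u - 0) ^ Suc 1) has_contour_integral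
          (2 * pi * \<i>) / fact 1 * (deriv ^^ 1) (\<lambda>w. G (y + cscale w v)) 0) (circlepath 0 s)"
        apply (rule Cauchy_has_contour_integral_higher_derivative_circlepath)
        using hol s
        by (auto intro!: holomorphic_on_imp_continuous_on elim!: holomorphic_on_subset)
      ultimately show ?thesis by simp
    qed
    show ?thesis
      unfolding continuous_at_eps_delta
    proof (intro allI impI)
      fix e :: real assume e: "e > 0"
      obtain d where d: "d > 0" "\<And>x x'. x \<in> cball y0 (2 * \<rho>) \<Longrightarrow> x' \<in> cball y0 (2 * \<rho>) \<Longrightarrow>
          dist x' x < d \<Longrightarrow> dist (G x') (G x) < e * s / 2"
        using ucG[unfolded uniformly_continuous_on_def, rule_format, of "e * s / 2"] e s by auto
      show "\<exists>d>0. \<forall>x'. dist x' y0 < d \<longrightarrow>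
          dist (frechet_derivative G (at x') v) (frechet_derivative G (at y0) v) < e"
      proof (intro exI[of _ "min d \<rho>"] conjI allI impI)
        show "min d \<rho> > 0" using d \<rho> by simp
        fix y assume y: "dist y y0 < min d \<rho>"
        have yb: "y \<in> ball y0 \<rho>" using y by (simp add: dist_commute)
        have y0b: "y0 \<in> ball y0 \<rho>" using \<rho> by simp
        have hc: "((\<lambda>u. G (y + cscale u v) / (u - 0) ^ Suc 1 - G (y0 + cscale u v) / (u - 0) ^ Suc 1)
            has_contour_integral (2 * pi * \<i>) / fact 1 * frechet_derivative G (at y) v
               - (2 * pi * \<i>) / fact 1 * frechet_derivative G (at y0) v) (circlepath 0 s)"
          by (rule has_contour_integral_diff[OF integ[OF yb] integ[OF y0b]])
        have bound: "norm (G (y + cscale u v) / (u - 0) ^ Suc 1 - G (y0 + cscale u v) / (u - 0) ^ Suc 1)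
            \<le> (e * s / 2) / s^2" if u: "norm (u - 0) = s" for u
        proof -
          have "norm u < 2 * s" using u s by simp
          then have m1: "y + cscale u v \<in> cball y0 (2 * \<rho>)" "y0 + cscale u v \<in> cball y0 (2 * \<rho>)"
            using inU[OF yb] inU[OF y0b] ball_subset_cball by blast+
          have "dist (y + cscale u v) (y0 + cscale u v) < d" using y by (simp add: dist_norm)
          then have "norm (G (y + cscale u v) - G (y0 + cscale u v)) < e * s / 2"
            using d(2)[OF m1(2) m1(1)] by (simp add: dist_norm)
          then have nle: "norm (G (y + cscale u v) - G (y0 + cscale u v)) \<le> e * s / 2" by simp
          have eq: "G (y + cscale u v) / (u - 0) ^ Suc 1 - G (y0 + cscale u v) / (u - 0) ^ Suc 1
              = (G (y + cscale u v) - G (y0 + cscale u v)) / u^2"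
            by (simp add: diff_divide_distrib power2_eq_square)
          have "norm (G (y + cscale u v) / (u - 0) ^ Suc 1 - G (y0 + cscale u v) / (u - 0) ^ Suc 1)
              = norm (G (y + cscale u v) - G (y0 + cscale u v)) / s^2"
            unfolding eq using u by (simp add: norm_divide norm_power)
          also have "\<dots> \<le> (e * s / 2) / s^2"
            by (rule divide_right_mono[OF nle]) simp
          finally show ?thesis .
        qed
        have "norm ((2 * pi * \<i>) / fact 1 * frechet_derivative G (at y) v
               - (2 * pi * \<i>) / fact 1 * frechet_derivative G (at y0) v) \<le> (e * s / 2) / s^2 * (2 * pi * s)"
          by (rule has_contour_integral_bound_circlepath[OF hc _ s bound]) (use e s in auto)
        then have "2 * pi * norm (frechet_derivative G (at y) v - frechet_derivative G (at y0) v)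
            \<le> (e * s / 2) / s^2 * (2 * pi * s)"
          by (simp add: norm_mult flip: right_diff_distrib)
        also have "\<dots> = 2 * pi * (e / 2)" using s by (simp add: power2_eq_square field_simps)
        finally have "norm (frechet_derivative G (at y) v - frechet_derivative G (at y0) v) \<le> e / 2"
          by simp
        then show "dist (frechet_derivative G (at y) v) (frechet_derivative G (at y0) v) < e"
          using e by (simp add: dist_norm)
      qed
    qed
  qed
  then show ?thesis using U by (simp add: continuous_on_eq_continuous_at)
qed



lemma bl_fst0: "bounded_linear (\<lambda>v::(complex^'m) \<times> complex. (fst v, 0::complex))"
  by (rule bounded_linear_Pair[OF bounded_linear_fst bounded_linear_zero])

lemma div_last:
  fixes G :: "(complex^'m) \<times> complex \<Rightarrow> complex"
  assumes hG: "hgerm 0 G" and G0: "\<forall>\<^sub>F X in nhds 0. G (X, 0) = 0"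
  shows "\<exists>B. hgerm 0 B \<and> (\<forall>\<^sub>F x in nhds 0. G x = snd x * B x)"
proof -
  obtain E1 where E1: "E1 > 0" "\<And>x. dist x 0 < E1 \<Longrightarrow> cdiff_at G x"
    using hG[unfolded hgerm_ev eventually_nhds_metric] by blast
  obtain E2 where E2: "E2 > 0" "\<And>X. dist X 0 < E2 \<Longrightarrow> G (X, 0) = 0"
    using G0[unfolded eventually_nhds_metric] by blast
  define E where "E = min E1 E2"
  have E: "E > 0" using E1 E2 by (simp add: E_def)
  have cd: "cdiff_at G x" if "norm x < E" for x
    using E1(2)[of x] that by (simp add: E_def)
  have z: "G (X, 0) = 0" if "norm X < E" for X
    using E2(2)[of X] that by (simp add: E_def)
  define R where "R = E / 2"
  have R: "R > 0" using E by (simp add: R_def)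
  define \<gamma> where "\<gamma> = (\<lambda>t::real. complex_of_real R * exp (2 * of_real pi * \<i> * of_real t))"
  have \<gamma>n: "norm (\<gamma> t) = R" for t
    using R by (simp add: \<gamma>_def norm_mult)
  have \<gamma>nz: "\<gamma> t \<noteq> 0" for t using \<gamma>n[of t] R by auto
  have \<gamma>c: "isCont \<gamma> t" for t unfolding \<gamma>_def by (intro continuous_intros)
  have \<gamma>circ: "circlepath 0 R = \<gamma>" unfolding circlepath \<gamma>_def by simp
  have \<gamma>vd: "vector_derivative \<gamma> (at t) = 2 * pi * \<i> * \<gamma> t" for t
    using vector_derivative_circlepath[of 0 R t] unfolding \<gamma>circ by (simp add: \<gamma>_def)
  define V where "V = ball (0::(complex^'m) \<times> complex) (E / 4)"
  have Vo: "open V" and Vc: "convex V" and V0: "0 \<in> V" using E by (auto simp: V_def)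
  have Vfst: "norm (fst x) < E / 4" if "x \<in> V" for x
    using that norm_fst_le[of "fst x" "snd x"] by (simp add: V_def)
  have Vsnd: "norm (snd x) < E / 4" if "x \<in> V" for x
    using that norm_snd_le[of "snd x" "fst x"] by (simp add: V_def)
  have inE: "norm (fst x, \<gamma> t) < E" if "x \<in> V" for x t
  proof -
    have "norm (fst x, \<gamma> t) \<le> norm (fst x) + norm (\<gamma> t)" by (rule norm_Pair_le)
    also have "\<dots> < E" using Vfst[OF that] \<gamma>n[of t] norm_ge_zero[of "fst x"] unfolding R_def by linarith
    finally show ?thesis .
  qed
  have nz: "\<gamma> t - snd x \<noteq> 0" if "x \<in> V" for x t
  proof
    assume "\<gamma> t - snd x = 0"
    then have "norm (\<gamma> t) = norm (snd x)" by simp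
    then show False using Vsnd[OF that] \<gamma>n[of t] E unfolding R_def by linarith
  qed
  define K where "K x t = G (fst x, \<gamma> t) * (2 * pi * \<i> / (\<gamma> t - snd x))" for x t
  define DG where "DG y = frechet_derivative G (at y)" for y
  define fxf where "fxf x t = (\<lambda>v. DG (fst x, \<gamma> t) (fst v, 0) * (2 * pi * \<i> / (\<gamma> t - snd x))
      + G (fst x, \<gamma> t) * (2 * pi * \<i> / (\<gamma> t - snd x)^2) * snd v)" for x t
  define fx where "fx x t = Blinfun (fxf x t)" for x t
  have blDG: "bounded_linear (DG y)" if "norm y < E" for y
    unfolding DG_def using cdiff_fd(1)[OF cd[OF that]] has_derivative_bounded_linear by blast
  have blf: "bounded_linear (fxf x t)" if "x \<in> V" for x t
    unfolding fxf_def
    by (intro bounded_linear_add bounded_linear_compose[OF bounded_linear_mult_left]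
        bounded_linear_compose[OF blDG[OF inE[OF that]] bl_fst0]
        bounded_linear_compose[OF bounded_linear_mult_right bounded_linear_snd])
  have fx_apply: "blinfun_apply (fx x t) = fxf x t" if "x \<in> V" for x t
    unfolding fx_def by (rule bounded_linear_Blinfun_apply[OF blf[OF that]])
  have Kder: "((\<lambda>x. K x t) has_derivative blinfun_apply (fx x t)) (at x within V)"
    if x: "x \<in> V" for x t
  proof -
    have d1: "((\<lambda>x. G (fst x, \<gamma> t)) has_derivative (\<lambda>v. DG (fst x, \<gamma> t) (fst v, 0))) (at x)"
    proof -
      have "((\<lambda>x. (fst x, \<gamma> t)) has_derivative (\<lambda>v. (fst v, 0))) (at x)"
        by (rule has_derivative_Pair[OF has_derivative_fst[OF has_derivative_ident] has_derivative_const])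
      from has_derivative_compose[OF this cdiff_fd(1)[OF cd[OF inE[OF x]]]] show ?thesis
        by (simp add: DG_def)
    qed
    have d2: "((\<lambda>x. 2 * pi * \<i> / (\<gamma> t - snd x)) has_derivative
        (\<lambda>v. (2 * pi * \<i> / (\<gamma> t - snd x)^2) * snd v)) (at x)"
    proof -
      have "((\<lambda>L. 2 * pi * \<i> / (\<gamma> t - L)) has_field_derivative (2 * pi * \<i> / (\<gamma> t - snd x)^2)) (at (snd x))"
        using nz[OF x, of t]
        by (auto intro!: derivative_eq_intros simp: power2_eq_square field_simps)
      from has_derivative_compose[OF has_derivative_snd[OF has_derivative_ident] this[unfolded has_field_derivative_def]]
      show ?thesis by simp
    qed
    show ?thesis
      unfolding fx_apply[OF x] K_def
      by (rule has_derivative_at_withinI, rule has_derivative_eq_rhs[OF has_derivative_mult[OF d1 d2]])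
         (auto simp: fxf_def algebra_simps)
  qed
  have Gc: "isCont G y" if "norm y < E" for y using cdiff_cont[OF cd[OF that]] .
  have DGc: "isCont (\<lambda>y. DG y w) y" if "norm y < E" for y w
  proof -
    have "continuous_on (ball 0 E) (\<lambda>y. frechet_derivative G (at y) w)"
      by (rule cdiff_C1) (auto intro: cd)
    then show ?thesis using that
      by (simp add: DG_def continuous_on_eq_continuous_at)
  qed
  have Kc: "continuous_on (cbox 0 1) (K x)" if x: "x \<in> V" for x
  proof (rule continuous_at_imp_continuous_on, rule ballI)
    fix t :: real
    have "isCont (\<lambda>t. G (fst x, \<gamma> t)) t"
      by (rule isCont_o2[where f="\<lambda>t. (fst x, \<gamma> t)", OF _ Gc[OF inE[OF x]]]) (intro continuous_intros \<gamma>c)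
    then show "isCont (K x) t"
      unfolding K_def using nz[OF x, of t] by (intro continuous_intros \<gamma>c) auto
  qed
  have fxc: "continuous_on (V \<times> cbox 0 1) (\<lambda>(x, t). fx x t)"
  proof (rule continuous_on_blinfun_componentwise)
    fix b :: "(complex^'m) \<times> complex"
    have eq: "\<And>p. p \<in> V \<times> cbox 0 1 \<Longrightarrow> (\<lambda>(x, t). fx x t) p b = fxf (fst p) (snd p) b"
      using fx_apply by auto
    have "continuous_on (V \<times> cbox 0 1) (\<lambda>p. fxf (fst p) (snd p) b)"
    proof (rule continuous_at_imp_continuous_on, rule ballI)
      fix p :: "((complex^'m) \<times> complex) \<times> real" assume p: "p \<in> V \<times> cbox 0 1"
      then have pV: "fst p \<in> V" by auto
      have c0: "isCont (\<lambda>p::((complex^'m) \<times> complex) \<times> real. (fst (fst p), \<gamma> (snd p))) p"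
        by (intro continuous_intros isCont_o2[OF _ \<gamma>c])
      have c1: "isCont (\<lambda>p. DG (fst (fst p), \<gamma> (snd p)) (fst b, 0)) p"
        by (rule isCont_o2[OF c0 DGc[OF inE[OF pV]]])
      have c2: "isCont (\<lambda>p. G (fst (fst p), \<gamma> (snd p))) p"
        by (rule isCont_o2[OF c0 Gc[OF inE[OF pV]]])
      have c3: "isCont (\<lambda>p::((complex^'m) \<times> complex) \<times> real. \<gamma> (snd p)) p"
        by (intro continuous_intros isCont_o2[OF _ \<gamma>c])
      show "isCont (\<lambda>p. fxf (fst p) (snd p) b) p"
        unfolding fxf_def using nz[OF pV, of "snd p"]
        by (intro continuous_intros c1 c2 c3) auto
    qed
    then show "continuous_on (V \<times> cbox 0 1) (\<lambda>x. ((\<lambda>(x, t). fx x t) x) b)"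
      by (rule continuous_on_cong[THEN iffD1, rotated 2]) (use eq in auto)
  qed
  define I where "I x = integral (cbox 0 1) (K x)" for x
  have Icd: "cdiff_at I x0" if x0: "x0 \<in> V" for x0
  proof -
    have der: "(I has_derivative blinfun_apply (integral (cbox 0 1) (fx x0))) (at x0 within V)"
      unfolding I_def
      by (rule leibniz_rule[OF Kder integrable_continuous[OF Kc] fxc x0 Vc])
    have fxi: "fx x0 integrable_on cbox 0 1"
    proof (rule integrable_continuous)
      have "continuous_on (cbox 0 1) ((\<lambda>(x, t). fx x t) \<circ> (\<lambda>t. (x0, t)))"
        by (rule continuous_on_compose[OF _ continuous_on_subset[OF fxc]])
           (use x0 in \<open>auto intro!: continuous_intros\<close>)
      then show "continuous_on (cbox 0 1) (fx x0)" by (simp add: o_def)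
    qed
    show ?thesis
    proof (rule cdiffI)
      show "(I has_derivative blinfun_apply (integral (cbox 0 1) (fx x0))) (at x0)"
        using der at_within_open[OF x0 Vo] by simp
      fix c v
      have "blinfun_apply (integral (cbox 0 1) (fx x0)) (cscale c v)
          = integral (cbox 0 1) (\<lambda>t. fx x0 t (cscale c v))"
        by (rule blinfun_apply_integral[OF fxi])
      also have "\<dots> = integral (cbox 0 1) (\<lambda>t. c * fx x0 t v)"
      proof (rule integral_cong)
        fix t
        have "DG (fst x0, \<gamma> t) (c *s fst v, 0) = DG (fst x0, \<gamma> t) (cscale c (fst v, 0))"
          by (simp add: cscale_Pair)
        also have "\<dots> = c * DG (fst x0, \<gamma> t) (fst v, 0)"
          unfolding DG_def by (rule cdiff_fd(2)[OF cd[OF inE[OF x0]]])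
        finally have "DG (fst x0, \<gamma> t) (c *s fst v, 0) = c * DG (fst x0, \<gamma> t) (fst v, 0)" .
        then show "fx x0 t (cscale c v) = c * fx x0 t v"
          unfolding fx_apply[OF x0] fxf_def by (simp add: cscale_fst cscale_snd algebra_simps)
      qed
      also have "\<dots> = c * integral (cbox 0 1) (\<lambda>t. fx x0 t v)" by simp
      also have "\<dots> = c * blinfun_apply (integral (cbox 0 1) (fx x0)) v"
        by (simp only: blinfun_apply_integral[OF fxi])
      finally show "blinfun_apply (integral (cbox 0 1) (fx x0)) (cscale c v)
          = c * blinfun_apply (integral (cbox 0 1) (fx x0)) v" .
    qed
  qed
  define B where "B x = I x * (1 / (2 * pi * \<i>))" for x
  have hB: "hgerm 0 B"
    unfolding hgerm_def holo_on_def
  proof (intro exI[of _ V] conjI ballI)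
    fix x assume "x \<in> V"
    then show "cdiff_at B x" unfolding B_def by (intro cdiff_mult Icd cdiff_const)
  qed (use V0 Vo in auto)
  have ident: "G x = snd x * B x" if x: "x \<in> V" for x
  proof (cases "snd x = 0")
    case True
    then have "G x = G (fst x, 0)" by (metis prod.collapse)
    also have "\<dots> = 0" using Vfst[OF x] E by (intro z) linarith
    finally show ?thesis using True by simp
  next
    case False
    define X where "X = fst x"
    define L where "L = snd x"
    have nX: "norm X < E / 4" using Vfst[OF x] by (simp add: X_def)
    have nL: "norm L < R" using Vsnd[OF x] E norm_ge_zero[of "snd x"] unfolding L_def R_def by linarith
    have hol: "(\<lambda>w. G (X, w)) holomorphic_on ball 0 (3 * E / 4)"
      unfolding holomorphic_on_def
    proof
      fix w :: complex assume w: "w \<in> ball 0 (3 * E / 4)"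
      have "norm (X, w) \<le> norm X + norm w" by (rule norm_Pair_le)
      also have "\<dots> < E" using nX w by (simp add: dist_norm)
      finally have "cdiff_at G (X, w)" by (rule cd)
      from cdiff_partial_L[OF this] show "(\<lambda>w. G (X, w)) field_differentiable at w within ball 0 (3 * E / 4)"
        by (meson field_differentiable_at_within field_differentiable_def)
    qed
    have sub: "cball 0 R \<subseteq> ball (0::complex) (3 * E / 4)" using E by (auto simp: R_def)
    have contc: "continuous_on (cball 0 R) (\<lambda>w. G (X, w))"
      by (rule holomorphic_on_imp_continuous_on[OF holomorphic_on_subset[OF hol sub]])
    have holb: "(\<lambda>w. G (X, w)) holomorphic_on ball 0 R"
      by (rule holomorphic_on_subset[OF hol]) (use sub in auto)
    have c1: "((\<lambda>w. G (X, w) / (w - L)) has_contour_integral (2 * of_real pi * \<i> * G (X, L))) (circlepath 0 R)"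
      by (rule Cauchy_integral_circlepath[OF contc holb]) (use nL in simp)
    have c2: "((\<lambda>w. G (X, w) / (w - 0)) has_contour_integral (2 * of_real pi * \<i> * G (X, 0))) (circlepath 0 R)"
      by (rule Cauchy_integral_circlepath[OF contc holb]) (use R in simp)
    have GX0: "G (X, 0) = 0" using nX E by (intro z) linarith
    have c3: "((\<lambda>w. G (X, w) / (w * (w - L))) has_contour_integral (2 * of_real pi * \<i> * G (X, L) / L)) (circlepath 0 R)"
    proof -
    have c3': "((\<lambda>w. (G (X, w) / (w - L) - G (X, w) / (w - 0)) / L) has_contour_integral
        ((2 * of_real pi * \<i> * G (X, L) - 2 * of_real pi * \<i> * G (X, 0)) / L)) (circlepath 0 R)"
      by (rule has_contour_integral_div[OF has_contour_integral_diff[OF c1 c2]])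
    then have c3'': "((\<lambda>w. (G (X, w) / (w - L) - G (X, w) / (w - 0)) / L) has_contour_integral
        (2 * of_real pi * \<i> * G (X, L) / L)) (circlepath 0 R)"
      by (simp add: GX0)
    show ?thesis
    proof (rule has_contour_integral_eq[OF c3''])
      fix w assume "w \<in> path_image (circlepath 0 R)"
      then have w: "norm w = R" using R by simp
      then have "w \<noteq> 0" "w - L \<noteq> 0" using R nL by auto
      then show "(G (X, w) / (w - L) - G (X, w) / (w - 0)) / L = G (X, w) / (w * (w - L))"
        using False by (simp add: L_def[symmetric] field_simps)
    qed
    qed
    have "I x = contour_integral (circlepath 0 R) (\<lambda>w. G (X, w) / (w * (w - L)))"
      unfolding contour_integral_integral I_def \<gamma>circ cbox_interval
    proof (rule integral_cong)
      fix t
      show "K x t = G (X, \<gamma> t) / (\<gamma> t * (\<gamma> t - L)) * vector_derivative \<gamma> (at t)"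
        unfolding K_def \<gamma>vd X_def L_def using \<gamma>nz[of t] nz[OF x, of t] by (simp add: field_simps)
    qed
    also have "\<dots> = 2 * of_real pi * \<i> * G (X, L) / L"
      by (rule contour_integral_unique[OF c3])
    finally have "I x = 2 * of_real pi * \<i> * G x / snd x" by (simp add: X_def L_def)
    then show ?thesis using False by (simp add: B_def field_simps)
  qed
  have "\<forall>\<^sub>F x in nhds 0. G x = snd x * B x"
    unfolding eventually_nhds using V0 Vo ident by blast
  with hB show ?thesis by blast
qed



lemma phi_factor:
  fixes \<phi> :: "complex \<Rightarrow> complex"
  assumes "\<exists>U. open U \<and> 0 \<in> U \<and> \<phi> holomorphic_on U" "\<phi> 0 = 0"
  shows "\<exists>g r. r > 0 \<and> g holomorphic_on ball 0 r \<and> (\<forall>z\<in>ball 0 r. \<phi> z = deriv \<phi> z * g z)"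
proof -
  obtain U where U: "open U" "0 \<in> U" "\<phi> holomorphic_on U" using assms(1) by blast
  obtain r0 where r0: "r0 > 0" "ball 0 r0 \<subseteq> U" using open_contains_ball U by blast
  have holS: "\<phi> holomorphic_on ball 0 r0" using U(3) r0(2) by (rule holomorphic_on_subset)
  show ?thesis
  proof (cases "\<phi> constant_on ball 0 r0")
    case True
    then obtain c where c: "\<And>z. z \<in> ball 0 r0 \<Longrightarrow> \<phi> z = c" by (auto simp: constant_on_def)
    have "c = 0" using c[of 0] r0 assms(2) by simp
    then show ?thesis
      by (intro exI[of _ "\<lambda>_. 0"] exI[of _ r0]) (use r0 c in auto)
  next
    case False
    have z0: "(0::complex) \<in> ball 0 r0" using r0 by simp
    show ?thesis
    proof (rule holomorphic_factor_zero_nonconstant[OF holS open_ball connected_ball z0 assms(2) False])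
    fix g0 r n assume gr: "0 < n" "0 < r" "ball 0 r \<subseteq> ball 0 r0"
      "g0 holomorphic_on ball 0 r"
      "\<And>w. w \<in> ball 0 r \<Longrightarrow> \<phi> w = (w - 0)^n * g0 w"
      "\<And>w. w \<in> ball 0 r \<Longrightarrow> g0 w \<noteq> 0"
    define d where "d w = of_nat n * g0 w + w * deriv g0 w" for w
    have hold: "d holomorphic_on ball 0 r"
      unfolding d_def using gr(4) by (intro holomorphic_intros holomorphic_deriv) auto
    have d0: "d 0 \<noteq> 0" using gr(1) gr(2) gr(6)[of 0] by (simp add: d_def)
    have "continuous (at 0) d"
      using holomorphic_on_imp_continuous_on[OF hold] gr(2)
      by (simp add: continuous_on_eq_continuous_at)
    from continuous_at_avoid[OF this d0] obtain e where e: "e > 0" "\<And>y. dist 0 y < e \<Longrightarrow> d y \<noteq> 0"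
      by blast
    define r1 where "r1 = min r e"
    have r1: "r1 > 0" "ball 0 r1 \<subseteq> ball 0 r" using e gr(2) by (auto simp: r1_def)
    have dnz: "d w \<noteq> 0" if "w \<in> ball 0 r1" for w using e(2)[of w] that by (simp add: r1_def)
    define g where "g w = w * g0 w / d w" for w
    have der: "deriv \<phi> w = w^(n-1) * d w" if w: "w \<in> ball 0 r" for w
    proof -
      have g0d: "(g0 has_field_derivative deriv g0 w) (at w)"
        using gr(4) w by (meson DERIV_deriv_iff_field_differentiable holomorphic_on_imp_differentiable_at open_ball)
      have "((\<lambda>w. w^n * g0 w) has_field_derivative (of_nat n * w^(n-1) * g0 w + w^n * deriv g0 w)) (at w)"
        by (rule derivative_eq_intros g0d refl)+ (simp add: algebra_simps)
      then have "(\<phi> has_field_derivative (of_nat n * w^(n-1) * g0 w + w^n * deriv g0 w)) (at w)"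
        by (rule has_field_derivative_transform_within_open[OF _ open_ball w]) (simp add: gr(5))
      then have "deriv \<phi> w = of_nat n * w^(n-1) * g0 w + w^n * deriv g0 w"
        by (rule DERIV_imp_deriv)
      also have "\<dots> = w^(n-1) * d w"
      proof -
        have "w^n = w^(n-1) * w" using gr(1) by (metis Suc_diff_1 power_Suc2)
        then show ?thesis by (simp add: d_def algebra_simps)
      qed
      finally show ?thesis .
    qed
    show ?thesis
    proof (intro exI[of _ g] exI[of _ r1] conjI ballI)
      show "r1 > 0" by fact
      show "g holomorphic_on ball 0 r1"
        unfolding g_def using dnz
        by (intro holomorphic_intros holomorphic_on_subset[OF gr(4) r1(2)] holomorphic_on_subset[OF hold r1(2)]) auto
      fix z :: complex assume z: "z \<in> ball 0 r1"
      then have zr: "z \<in> ball 0 r" using r1(2) z by blast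
      have "z^n = z^(n-1) * z" using gr(1) by (metis Suc_diff_1 power_Suc2)
      then show "\<phi> z = deriv \<phi> z * g z"
        using gr(5)[OF zr] der[OF zr] dnz[OF z] by (simp add: g_def field_simps)
    qed
    qed
  qed
qed

lemma ev_Phi:
  fixes \<phi> :: "complex \<Rightarrow> complex"
  assumes "isCont \<phi> 0" "\<phi> 0 = 0" "eventually P (nhds (0::(complex^'m) \<times> complex))"
  shows "\<forall>\<^sub>F x in nhds 0. P (fst x, \<phi> (snd x))"
proof -
  have s: "isCont (snd::(complex^'m) \<times> complex \<Rightarrow> complex) 0" by (intro continuous_intros)
  have c1: "isCont (\<lambda>x::(complex^'m) \<times> complex. \<phi> (snd x)) 0" using isCont_o2[OF s] assms(1) by simp
  have "isCont (\<lambda>x::(complex^'m) \<times> complex. (fst x, \<phi> (snd x))) 0"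
    by (intro continuous_intros c1)
  then have "((\<lambda>x::(complex^'m) \<times> complex. (fst x, \<phi> (snd x))) \<longlongrightarrow> 0) (nhds 0)"
    unfolding tendsto_nhds_iff isCont_def using assms(2) by (simp add: zero_prod_def)
  then show ?thesis using assms(3) unfolding filterlim_iff by blast
qed



lemma ev_snd: "eventually Q (nhds 0) \<Longrightarrow> \<forall>\<^sub>F x in nhds (0::(complex^'m) \<times> complex). Q (snd x)"
proof -
  assume Q: "eventually Q (nhds 0)"
  have "((\<lambda>x::(complex^'m) \<times> complex. snd x) \<longlongrightarrow> snd (0::(complex^'m) \<times> complex)) (nhds 0)"
    by (rule tendsto_snd[OF filterlim_ident])
  then show ?thesis using Q unfolding filterlim_iff by simp
qed

lemma cdiff_Phi_comp:
  "cdiff_at G (fst x, \<phi> (snd x)) \<Longrightarrow> \<phi> field_differentiable at (snd x) \<Longrightarrow>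
    cdiff_at (\<lambda>x. G (fst x, \<phi> (snd x))) x"
  by (rule cdiff_compose_Phi[OF _ cdiff_compose_field[OF _ cdiff_snd]])

lemma pdL_comp:
  assumes "cdiff_at H (X, \<phi> Z)" "\<phi> field_differentiable at Z"
  shows "deriv (\<lambda>t. H (X, \<phi> t)) Z = pdL H (X, \<phi> Z) * deriv \<phi> Z"
proof -
  have d1: "((\<lambda>t. H (X, t)) has_field_derivative frechet_derivative H (at (X, \<phi> Z)) (0, 1)) (at (\<phi> Z))"
    by (rule cdiff_partial_L[OF assms(1)])
  have p: "pdL H (X, \<phi> Z) = frechet_derivative H (at (X, \<phi> Z)) (0, 1)"
    unfolding pdL_def using DERIV_imp_deriv[OF d1] by simp
  have d2: "(\<phi> has_field_derivative deriv \<phi> Z) (at Z)"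
    using assms(2) by (simp add: DERIV_deriv_iff_field_differentiable)
  show ?thesis using DERIV_imp_deriv[OF DERIV_chain2[OF d1 d2]] p by simp
qed

lemma hgermI_ev: "(\<forall>\<^sub>F x in nhds a. cdiff_at g x) \<Longrightarrow> hgerm a g"
  by (simp add: hgerm_ev)

theorem mainTheorem2:
  fixes S :: "(complex^'n) set"
    and fam :: "complex^'n \<Rightarrow> complex \<Rightarrow> complex^'p"
    and \<phi> :: "complex \<Rightarrow> complex"
    and H :: "(complex^'p) \<times> complex \<Rightarrow> complex"
    and \<eta> :: "(complex^'p) \<times> complex \<Rightarrow> (complex^'p) \<times> complex"
  assumes S: "finite S" "S \<noteq> {}"
    and f_germ: "\<forall>s\<in>S. hvgerm (s, 0) (unf fam) \<and> fam s 0 = 0"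
    and F_stable: "stable_multigerm S (unf fam)"
    and phi: "\<exists>U. open U \<and> 0 \<in> U \<and> \<phi> holomorphic_on U" "\<phi> 0 = 0"
    and H: "defining_eq_disc S (unf fam) H"
    and eta: "Derlog H \<eta>"
  shows "Derlog (\<lambda>(X, Z). H (X, \<phi> Z))
           (\<lambda>(X, Z). ((\<chi> i. fst (\<eta> (X, \<phi> Z)) $ i * deriv \<phi> Z), snd (\<eta> (X, \<phi> Z))))
       \<and> ((\<forall>\<^sub>F X in nhds 0. snd (\<eta> (X, 0)) = 0) \<longrightarrow>
          (\<exists>\<xi>. (\<forall>\<^sub>F x in nhds 0.
                   (case x of (X, Z) \<Rightarrow> ((\<chi> i. fst (\<eta> (X, \<phi> Z)) $ i * deriv \<phi> Z), snd (\<eta> (X, \<phi> Z))))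
                   = cscale (deriv \<phi> (snd x)) (\<xi> x))
               \<and> Derlog (\<lambda>(X, Z). H (X, \<phi> Z)) \<xi>))"
proof -
  define h where "h = (\<lambda>(X, Z). H (X, \<phi> Z))"
  define et where "et = (\<lambda>(X, Z). ((\<chi> i. fst (\<eta> (X, \<phi> Z)) $ i * deriv \<phi> Z), snd (\<eta> (X, \<phi> Z))))"
  define \<Phi> where "\<Phi> x = (fst x, \<phi> (snd x))" for x :: "(complex^'p) \<times> complex"
  have h_eq: "h x = H (\<Phi> x)" for x by (simp add: h_def \<Phi>_def split_beta)
  have et_fst: "fst (et x) $ i = fst (\<eta> (\<Phi> x)) $ i * deriv \<phi> (snd x)" for x i
    by (simp add: et_def \<Phi>_def split_beta)
  have et_snd: "snd (et x) = snd (\<eta> (\<Phi> x))" for x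
    by (simp add: et_def \<Phi>_def split_beta)
  obtain U\<phi> where U\<phi>: "open U\<phi>" "0 \<in> U\<phi>" "\<phi> holomorphic_on U\<phi>" using phi(1) by blast
  have ev\<phi>: "\<forall>\<^sub>F z in nhds 0. \<phi> field_differentiable at z \<and> deriv \<phi> field_differentiable at z"
    unfolding eventually_nhds
    using U\<phi> holomorphic_deriv[OF U\<phi>(3) U\<phi>(1)]
    by (intro exI[of _ U\<phi>]) (auto intro: holomorphic_on_imp_differentiable_at)
  have \<phi>c: "isCont \<phi> 0"
    using U\<phi> holomorphic_on_imp_differentiable_at field_differentiable_imp_continuous_at by blast
  obtain a where a: "hgerm 0 a" "\<forall>\<^sub>F x in nhds 0. vf_act \<eta> H x = a x * H x"
    using eta by (auto simp: Derlog_def)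
  have h\<eta>: "hvgerm 0 \<eta>" using eta by (simp add: Derlog_def)
  have hH: "hgerm 0 H" using H by (simp add: defining_eq_disc_def)
  have ev0: "\<forall>\<^sub>F y in nhds 0. cdiff_at H y \<and> (\<forall>i. cdiff_at (\<lambda>y. fst (\<eta> y) $ i) y)
      \<and> cdiff_at (\<lambda>y. snd (\<eta> y)) y \<and> cdiff_at a y \<and> vf_act \<eta> H y = a y * H y"
    using hH h\<eta> a
    by (auto simp: hgerm_ev hvgerm_def intro!: eventually_conj eventually_all_finite)
  have evx: "\<forall>\<^sub>F x in nhds 0. (cdiff_at H (\<Phi> x) \<and> (\<forall>i. cdiff_at (\<lambda>y. fst (\<eta> y) $ i) (\<Phi> x))
      \<and> cdiff_at (\<lambda>y. snd (\<eta> y)) (\<Phi> x) \<and> cdiff_at a (\<Phi> x) \<and> vf_act \<eta> H (\<Phi> x) = a (\<Phi> x) * H (\<Phi> x))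
      \<and> (\<phi> field_differentiable at (snd x) \<and> deriv \<phi> field_differentiable at (snd x))"
    unfolding \<Phi>_def by (intro eventually_conj ev_Phi[OF \<phi>c phi(2) ev0] ev_snd[OF ev\<phi>])
  have pdX_h0: "pdX h i (X, Z) = pdX H i (X, \<phi> Z)" for i X Z
    by (simp add: pdX_def h_def cong: if_cong)
  have pdX_h: "pdX h i x = pdX H i (\<Phi> x)" for i x
    using pdX_h0[of i "fst x" "snd x"] by (simp add: \<Phi>_def)
  have pdL_h: "pdL h x = pdL H (\<Phi> x) * deriv \<phi> (snd x)"
    if "cdiff_at H (\<Phi> x)" "\<phi> field_differentiable at (snd x)" for x
  proof -
    have "pdL h x = deriv (\<lambda>t. H (fst x, \<phi> t)) (snd x)" by (simp add: pdL_def h_def)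
    also have "\<dots> = pdL H (fst x, \<phi> (snd x)) * deriv \<phi> (snd x)"
      by (rule pdL_comp) (use that in \<open>simp_all add: \<Phi>_def\<close>)
    finally show ?thesis by (simp add: \<Phi>_def)
  qed
  have compX: "cdiff_at (\<lambda>x. G (\<Phi> x)) x" if "cdiff_at G (\<Phi> x)" "\<phi> field_differentiable at (snd x)" for G x
    using cdiff_Phi_comp[of G x \<phi>] that by (simp add: \<Phi>_def)
  define good where "good x \<longleftrightarrow> cdiff_at H (\<Phi> x) \<and> (\<forall>i. cdiff_at (\<lambda>y. fst (\<eta> y) $ i) (\<Phi> x))
      \<and> cdiff_at (\<lambda>y. snd (\<eta> y)) (\<Phi> x) \<and> cdiff_at a (\<Phi> x) \<and> vf_act \<eta> H (\<Phi> x) = a (\<Phi> x) * H (\<Phi> x)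
      \<and> \<phi> field_differentiable at (snd x) \<and> deriv \<phi> field_differentiable at (snd x)" for x
  have evg: "\<forall>\<^sub>F x in nhds 0. good x"
    using evx by (rule eventually_mono) (simp add: good_def)
  have part1: "Derlog h et"
    unfolding Derlog_def
  proof (intro conjI exI[of _ "\<lambda>x. deriv \<phi> (snd x) * a (\<Phi> x)"])
    show "hvgerm 0 et"
      unfolding hvgerm_def
    proof (intro conjI allI hgermI_ev)
      fix i
      show "\<forall>\<^sub>F x in nhds 0. cdiff_at (\<lambda>x. fst (et x) $ i) x"
        unfolding et_fst using evg
      proof (rule eventually_mono)
        fix x assume x: "good x"
        show "cdiff_at (\<lambda>x. fst (\<eta> (\<Phi> x)) $ i * deriv \<phi> (snd x)) x"
          by (rule cdiff_mult[OF compX[where G="\<lambda>y. fst (\<eta> y) $ i"] cdiff_compose_field[OF _ cdiff_snd]])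
             (use x in \<open>simp_all add: good_def\<close>)
      qed
      show "\<forall>\<^sub>F x in nhds 0. cdiff_at (\<lambda>x. snd (et x)) x"
        unfolding et_snd using evg
      proof (rule eventually_mono)
        fix x assume x: "good x"
        show "cdiff_at (\<lambda>x. snd (\<eta> (\<Phi> x))) x"
          by (rule compX[where G="\<lambda>y. snd (\<eta> y)"]) (use x in \<open>simp_all add: good_def\<close>)
      qed
    qed
    show "hgerm 0 (\<lambda>x. deriv \<phi> (snd x) * a (\<Phi> x))"
      using evg
    proof (intro hgermI_ev, rule eventually_mono)
      fix x assume x: "good x"
      show "cdiff_at (\<lambda>x. deriv \<phi> (snd x) * a (\<Phi> x)) x"
        by (rule cdiff_mult[OF cdiff_compose_field[OF _ cdiff_snd] compX[where G=a]])
           (use x in \<open>simp_all add: good_def\<close>)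
    qed
    show "\<forall>\<^sub>F x in nhds 0. vf_act et h x = deriv \<phi> (snd x) * a (\<Phi> x) * h x"
      using evg
    proof (rule eventually_mono)
      fix x assume x: "good x"
      have cH: "cdiff_at H (\<Phi> x)" and fd: "\<phi> field_differentiable at (snd x)"
        and va: "vf_act \<eta> H (\<Phi> x) = a (\<Phi> x) * H (\<Phi> x)" using x by (simp_all add: good_def)
      have "vf_act et h x = deriv \<phi> (snd x) * vf_act \<eta> H (\<Phi> x)"
        unfolding vf_act_def et_fst et_snd pdX_h pdL_h[OF cH fd]
        by (simp add: sum_distrib_left algebra_simps)
      then show "vf_act et h x = deriv \<phi> (snd x) * a (\<Phi> x) * h x"
        using va by (simp add: h_eq)
    qed
  qed
  have part2: "\<exists>\<xi>. (\<forall>\<^sub>F x in nhds 0. et x = cscale (deriv \<phi> (snd x)) (\<xi> x)) \<and> Derlog h \<xi>"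
    if hz: "\<forall>\<^sub>F X in nhds 0. snd (\<eta> (X, 0)) = 0"
  proof -
    have hs: "hgerm 0 (\<lambda>y. snd (\<eta> y))" using h\<eta> by (simp add: hvgerm_def)
    obtain Bd where Bd: "hgerm 0 Bd" "\<forall>\<^sub>F y in nhds 0. snd (\<eta> y) = snd y * Bd y"
      using div_last[OF hs hz] by blast
    obtain g r where gr: "r > 0" "g holomorphic_on ball 0 r" "\<forall>z\<in>ball 0 r. \<phi> z = deriv \<phi> z * g z"
      using phi_factor[OF phi] by blast
    have evgr: "\<forall>\<^sub>F z in nhds 0. z \<in> ball 0 r \<and> g field_differentiable at z"
      unfolding eventually_nhds using gr
      by (intro exI[of _ "ball 0 r"]) (auto intro: holomorphic_on_imp_differentiable_at)
    have ev1: "\<forall>\<^sub>F y in nhds 0. cdiff_at Bd y \<and> snd (\<eta> y) = snd y * Bd y"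
      using Bd by (auto simp: hgerm_ev intro!: eventually_conj)
    have evx2: "\<forall>\<^sub>F x in nhds 0. (cdiff_at Bd (\<Phi> x) \<and> snd (\<eta> (\<Phi> x)) = snd (\<Phi> x) * Bd (\<Phi> x))
        \<and> (snd x \<in> ball 0 r \<and> g field_differentiable at (snd x))"
      unfolding \<Phi>_def by (intro eventually_conj ev_Phi[OF \<phi>c phi(2) ev1] ev_snd[OF evgr])
    define good2 where "good2 x \<longleftrightarrow> good x \<and> cdiff_at Bd (\<Phi> x) \<and> snd (\<eta> (\<Phi> x)) = \<phi> (snd x) * Bd (\<Phi> x)
        \<and> snd x \<in> ball 0 r \<and> g field_differentiable at (snd x)" for x
    have evall: "\<forall>\<^sub>F x in nhds 0. good2 x"
      using eventually_conj[OF evg evx2] by (rule eventually_mono) (simp add: good2_def \<Phi>_def)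
    define \<xi> where "\<xi> x = ((\<chi> i. fst (\<eta> (\<Phi> x)) $ i), g (snd x) * Bd (\<Phi> x))" for x
    have eq1: "\<forall>\<^sub>F x in nhds 0. et x = cscale (deriv \<phi> (snd x)) (\<xi> x)"
      using evall
    proof (rule eventually_mono)
      fix x assume x: "good2 x"
      have s1: "snd (\<eta> (\<Phi> x)) = \<phi> (snd x) * Bd (\<Phi> x)" using x by (simp add: good2_def)
      have s2: "\<phi> (snd x) = deriv \<phi> (snd x) * g (snd x)" using x gr(3) by (simp add: good2_def)
      show "et x = cscale (deriv \<phi> (snd x)) (\<xi> x)"
        unfolding cscale_def \<xi>_def
        by (rule prod_eqI) (simp_all add: vec_eq_iff et_fst et_snd s1 s2 mult.commute mult.left_commute)
    qed
    have d2: "Derlog h \<xi>"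
      unfolding Derlog_def
    proof (intro conjI exI[of _ "\<lambda>x. a (\<Phi> x)"])
      show "hvgerm 0 \<xi>"
        unfolding hvgerm_def
      proof (intro conjI allI hgermI_ev)
        fix i
        show "\<forall>\<^sub>F x in nhds 0. cdiff_at (\<lambda>x. fst (\<xi> x) $ i) x"
          unfolding \<xi>_def using evall
        proof (rule eventually_mono)
          fix x assume x: "good2 x"
          show "cdiff_at (\<lambda>x. fst ((\<chi> i. fst (\<eta> (\<Phi> x)) $ i), g (snd x) * Bd (\<Phi> x)) $ i) x"
            using compX[where G="\<lambda>y. fst (\<eta> y) $ i" and x=x] x by (simp add: good2_def good_def)
        qed
        show "\<forall>\<^sub>F x in nhds 0. cdiff_at (\<lambda>x. snd (\<xi> x)) x"
          unfolding \<xi>_def using evall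
        proof (rule eventually_mono)
          fix x assume x: "good2 x"
          have "cdiff_at (\<lambda>x. g (snd x) * Bd (\<Phi> x)) x"
            by (rule cdiff_mult[OF cdiff_compose_field[OF _ cdiff_snd] compX[where G=Bd]])
               (use x in \<open>simp_all add: good2_def good_def\<close>)
          then show "cdiff_at (\<lambda>x. snd ((\<chi> i. fst (\<eta> (\<Phi> x)) $ i), g (snd x) * Bd (\<Phi> x))) x"
            by simp
        qed
      qed
      show "hgerm 0 (\<lambda>x. a (\<Phi> x))"
        using evg
      proof (intro hgermI_ev, rule eventually_mono)
        fix x assume x: "good x"
        show "cdiff_at (\<lambda>x. a (\<Phi> x)) x"
          by (rule compX[where G=a]) (use x in \<open>simp_all add: good_def\<close>)
      qed
      show "\<forall>\<^sub>F x in nhds 0. vf_act \<xi> h x = a (\<Phi> x) * h x"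
        using evall
      proof (rule eventually_mono)
        fix x assume x: "good2 x"
        have s1: "snd (\<eta> (\<Phi> x)) = \<phi> (snd x) * Bd (\<Phi> x)" using x by (simp add: good2_def)
        have s2: "\<phi> (snd x) = deriv \<phi> (snd x) * g (snd x)" using x gr(3) by (simp add: good2_def)
        have cH: "cdiff_at H (\<Phi> x)" and fd: "\<phi> field_differentiable at (snd x)"
          and va: "vf_act \<eta> H (\<Phi> x) = a (\<Phi> x) * H (\<Phi> x)" using x by (simp_all add: good2_def good_def)
        have "vf_act \<xi> h x = vf_act \<eta> H (\<Phi> x)"
          unfolding vf_act_def pdX_h pdL_h[OF cH fd] \<xi>_def
          by (simp add: s1 s2 algebra_simps)
        then show "vf_act \<xi> h x = a (\<Phi> x) * h x"
          using va by (simp add: h_eq)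
      qed
    qed
    from eq1 d2 show ?thesis by blast
  qed
  show ?thesis
    unfolding h_def[symmetric] et_def[symmetric]
    using part1 part2 by blast
qed


end
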